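(* Let $c\in\mathbb{C}(t)\setminus\{0,1,t\}$ and $F_n$, $P_1$, $d$ as in the context. For every sufficiently small $\epsilon>0$ there exist $\delta>0$ and an integer $N>0$ such that $$\frac{1}{\deg F_n}\log\|F_n(1,t)\|-\frac{\log|P_1(1,0)|}{d}>-\epsilon$$ for all $t\in\mathbb{C}$ with $|t|<\delta$ and all $n\ge N$.
   Context: $F_{t_1,t_2}(z,w)=\big((t_1w^2-t_2z^2)^2,\;4t_2zw(w-z)(t_1w-t_2z)\big)$. $C=(c_1,c_2)$ is a pair of coprime homogeneous polynomials in $(t_1,t_2)$ of equal degree with $c(t)=c_1(t,1)/c_2(t,1)$. $F_1=F_{t_1,t_2}(C)/\gcd(F_{t_1,t_2}(C))=(P_1,Q_1)$, $d=\deg F_1$, $F_{n+1}=F_{t_1,t_2}(F_n)/t_2^2$, so $\deg F_n=4^{n-1}d$. $\|(z,w)\|=\max\{|z|,|w|\}$. *)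

theory Defs
  imports "HOL-Analysis.Analysis" "HOL-Computational_Algebra.Computational_Algebra" "HOL-Computational_Algebra.Field_as_Ring"
begin

text \<open>Bivariate polynomials in (t1,t2) over the complex numbers are represented as
  polynomials in t2 whose coefficients are polynomials in t1, i.e. C[t1][t2].\<close>

type_synonym bipoly = "complex poly poly"

definition T1 :: bipoly where "T1 = [:[:0, 1:]:]"
definition T2 :: bipoly where "T2 = [:0, 1:]"

definition eval2 :: "bipoly \<Rightarrow> complex \<Rightarrow> complex \<Rightarrow> complex" where
  "eval2 H x y = poly (map_poly (\<lambda>q. poly q x) H) y"

text \<open>H is homogeneous of total degree D (the monomial t1^j t2^k has coefficient coeff (coeff H k) j).\<close>
definition homogeneous :: "nat \<Rightarrow> bipoly \<Rightarrow> bool" where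
  "homogeneous D H \<longleftrightarrow> (\<forall>j k. coeff (coeff H k) j \<noteq> 0 \<longrightarrow> j + k = D)"

definition totdeg :: "bipoly \<Rightarrow> nat" where
  "totdeg H = Max (insert 0 {j + k | j k. coeff (coeff H k) j \<noteq> 0})"

definition pdeg :: "bipoly \<times> bipoly \<Rightarrow> nat" where
  "pdeg F = max (totdeg (fst F)) (totdeg (snd F))"

definition Fmap :: "bipoly \<times> bipoly \<Rightarrow> bipoly \<times> bipoly" where
  "Fmap zw = (case zw of (z, w) \<Rightarrow>
     ((T1 * w^2 - T2 * z^2)^2, 4 * T2 * z * w * (w - z) * (T1 * w - T2 * z)))"

definition F1 :: "bipoly \<times> bipoly \<Rightarrow> bipoly \<times> bipoly" where
  "F1 C = (case Fmap C of (P, Q) \<Rightarrow> (P div gcd P Q, Q div gcd P Q))"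

definition Fstep :: "bipoly \<times> bipoly \<Rightarrow> bipoly \<times> bipoly" where
  "Fstep F = (case Fmap F of (P, Q) \<Rightarrow> (P div T2^2, Q div T2^2))"

text \<open>Fseq C n = F_n for n \<ge> 1 (F_1 = F1 C).\<close>
definition Fseq :: "bipoly \<times> bipoly \<Rightarrow> nat \<Rightarrow> bipoly \<times> bipoly" where
  "Fseq C n = (Fstep ^^ (n - 1)) (F1 C)"

definition pnorm :: "complex \<times> complex \<Rightarrow> real" where
  "pnorm zw = max (cmod (fst zw)) (cmod (snd zw))"

definition evalpair :: "bipoly \<times> bipoly \<Rightarrow> complex \<Rightarrow> complex \<Rightarrow> complex \<times> complex" where
  "evalpair F x y = (eval2 (fst F) x y, eval2 (snd F) x y)"

definition dehom :: "bipoly \<Rightarrow> complex poly" where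
  "dehom H = poly H 1"

end

theory Submission imports Defs begin

lemma mp_add:
  assumes "f 0 = 0" "\<And>a b. f (a + b) = f a + f b"
  shows "map_poly f (p + q) = map_poly f p + map_poly f q"
  by (intro poly_eqI) (simp add: coeff_map_poly assms)

lemma mp_diff:
  fixes f :: "'a::comm_ring_1 \<Rightarrow> 'b::comm_ring_1"
  assumes "f 0 = 0" "\<And>a b. f (a - b) = f a - f b"
  shows "map_poly f (p - q) = map_poly f p - map_poly f q"
  by (intro poly_eqI) (simp add: coeff_map_poly assms)

lemma mp_mult:
  fixes f :: "'a::comm_ring_1 \<Rightarrow> 'b::comm_ring_1"
  assumes f0: "f 0 = 0" and fa: "\<And>a b. f (a + b) = f a + f b" and fm: "\<And>a b. f (a * b) = f a * f b"
  shows "map_poly f (p * q) = map_poly f p * map_poly f q"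
proof (induction p)
  case 0 then show ?case by simp
next
  case (pCons a p)
  have "map_poly f (pCons a p * q) = map_poly f (smult a q) + map_poly f (pCons 0 (p * q))"
    by (simp add: mp_add[OF f0 fa])
  also have "\<dots> = smult (f a) (map_poly f q) + pCons 0 (map_poly f p * map_poly f q)"
    by (simp add: map_poly_smult[OF f0 fm] map_poly_pCons f0 pCons.IH)
  also have "\<dots> = map_poly f (pCons a p) * map_poly f q"
    by (simp add: map_poly_pCons f0)
  finally show ?case .
qed

lemma mp_const: "f 0 = 0 \<Longrightarrow> map_poly f [:c:] = [:f c:]"
  by (simp add: map_poly_pCons)

lemma eval2_add: "eval2 (A + B) x y = eval2 A x y + eval2 B x y"
  unfolding eval2_def by (simp add: mp_add)
lemma eval2_diff: "eval2 (A - B) x y = eval2 A x y - eval2 B x y"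
  unfolding eval2_def by (simp add: mp_diff)
lemma eval2_mult: "eval2 (A * B) x y = eval2 A x y * eval2 B x y"
  unfolding eval2_def by (simp add: mp_mult)
lemma eval2_const: "eval2 [:c:] x y = poly c x"
  unfolding eval2_def by (simp add: mp_const)
lemma eval2_one: "eval2 1 x y = 1"
  using eval2_const[of 1 x y] by (simp add: one_pCons)
lemma eval2_power: "eval2 (A ^ n) x y = eval2 A x y ^ n"
  by (induction n) (simp_all add: eval2_one eval2_mult)
lemma eval2_numeral: "eval2 (numeral n) x y = numeral n"
  by (simp add: numeral_poly eval2_const)
lemma eval2_T1: "eval2 T1 x y = x"
  unfolding T1_def by (simp add: eval2_const)
lemma eval2_T2: "eval2 T2 x y = y"
  unfolding T2_def eval2_def by (simp add: map_poly_pCons)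

lemmas eval2_simps = eval2_add eval2_diff eval2_mult eval2_power eval2_numeral eval2_T1 eval2_T2 eval2_one

definition s0 :: "complex poly \<Rightarrow> bipoly" where
  "s0 q = poly (map_poly (\<lambda>a. [:[:a:]:]) q) (T1 * T2)"
definition sg :: "bipoly \<Rightarrow> bipoly" where
  "sg H = poly (map_poly s0 H) T2"

lemma s0_0: "s0 0 = 0" by (simp add: s0_def)
lemma s0_add: "s0 (a + b) = s0 a + s0 b"
  unfolding s0_def by (simp add: mp_add)
lemma s0_diff: "s0 (a - b) = s0 a - s0 b"
  unfolding s0_def by (simp add: mp_diff)
lemma s0_mult: "s0 (a * b) = s0 a * s0 b"
  unfolding s0_def by (simp add: mp_mult)

lemma sg_add: "sg (A + B) = sg A + sg B"
  unfolding sg_def by (simp add: mp_add s0_0 s0_add)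
lemma sg_diff: "sg (A - B) = sg A - sg B"
  unfolding sg_def by (simp add: mp_diff s0_0 s0_diff)
lemma sg_mult: "sg (A * B) = sg A * sg B"
  unfolding sg_def by (simp add: mp_mult s0_0 s0_add s0_mult)
lemma sg_const: "sg [:c:] = s0 c"
  unfolding sg_def by (simp add: mp_const s0_0)
lemma s0_const: "s0 [:c:] = [:[:c:]:]"
  unfolding s0_def by (simp add: mp_const)
lemma sg_one: "sg 1 = 1"
  using sg_const[of 1] s0_const[of 1] by (simp add: one_pCons)
lemma sg_power: "sg (A ^ n) = sg A ^ n"
  by (induction n) (simp_all add: sg_one sg_mult)
lemma sg_numeral: "sg (numeral n) = numeral n"
  by (simp add: numeral_poly sg_const s0_const)
lemma sg_T1: "sg T1 = T1 * T2"
  unfolding T1_def by (simp add: sg_const s0_def map_poly_pCons T1_def)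
lemma sg_T2: "sg T2 = T2"
  unfolding T2_def sg_def by (simp add: map_poly_pCons s0_0 s0_const one_pCons)


lemma T2_mult: "T2 * Y = pCons 0 Y" by (simp add: T2_def)
lemma T1_mult: "T1 * Y = smult [:0,1:] Y" by (simp add: T1_def)

lemma coeff_T2_mult: "coeff (coeff (T2 * Y) m) j = (if m = 0 then 0 else coeff (coeff Y (m-1)) j)"
  by (cases m) (simp_all add: T2_mult)
lemma coeff_T1_mult: "coeff (coeff (T1 * Y) m) j = (if j = 0 then 0 else coeff (coeff Y m) (j-1))"
  by (cases j) (simp_all add: T1_mult)

lemma s0_pCons: "s0 (pCons c q) = [:[:c:]:] + T1 * T2 * s0 q"
  unfolding s0_def by (simp add: map_poly_pCons)
lemma sg_pCons: "sg (pCons a H) = s0 a + T2 * sg H"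
  unfolding sg_def by (simp add: map_poly_pCons s0_0)

lemma coeff_s0: "coeff (coeff (s0 q) m) j = (if j = m then coeff q j else 0)"
proof (induction q arbitrary: m j)
  case 0 then show ?case by (simp add: s0_0)
next
  case (pCons c q)
  show ?case
    unfolding s0_pCons mult.assoc
    by (cases m; cases j) (simp_all add: coeff_T1_mult coeff_T2_mult pCons.IH coeff_pCons)
qed

lemma coeff_sg: "coeff (coeff (sg H) m) j = (if j \<le> m then coeff (coeff H (m - j)) j else 0)"
proof (induction H arbitrary: m j)
  case 0 then show ?case by (simp add: sg_def)
next
  case (pCons a H)
  show ?case
  proof (cases m)
    case 0 then show ?thesis by (simp add: sg_pCons coeff_T2_mult coeff_s0)
  next
    case (Suc k)
    consider "j = m" | "j < m" | "j > m" by linarith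
    then show ?thesis
    proof cases
      case 1 then show ?thesis using Suc by (simp add: sg_pCons coeff_T2_mult coeff_s0 pCons.IH)
    next
      case 2
      then have e: "m - j = Suc (k - j)" using Suc by simp
      show ?thesis using 2 Suc unfolding sg_pCons coeff_add coeff_T2_mult e
        by (simp add: coeff_s0 pCons.IH)
    next
      case 3 then show ?thesis using Suc by (simp add: sg_pCons coeff_T2_mult coeff_s0 pCons.IH)
    qed
  qed
qed


lemma sg_eq_0_iff: "sg H = 0 \<longleftrightarrow> H = 0"
proof
  assume "sg H = 0"
  then have "coeff (coeff H k) j = 0" for k j
    using coeff_sg[of H "j + k" j] by simp
  then show "H = 0" by (intro poly_eqI) (simp add: poly_eq_iff)
qed (simp add: sg_def)

lemma totdeg_sg: "totdeg H = degree (sg H)"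
proof -
  define S where "S = {j + k | j k. coeff (coeff H k) j \<noteq> 0}"
  have le: "x \<le> degree (sg H)" if "x \<in> S" for x
  proof -
    obtain j k where x: "x = j + k" and nz: "coeff (coeff H k) j \<noteq> 0" using \<open>x \<in> S\<close> S_def by auto
    have "coeff (coeff (sg H) (j + k)) j \<noteq> 0" using nz by (simp add: coeff_sg)
    then have "coeff (sg H) (j + k) \<noteq> 0" by auto
    then show ?thesis using x le_degree by blast
  qed
  have fin: "finite S" by (rule finite_subset[of _ "{..degree (sg H)}"]) (use le in auto)
  show ?thesis
  proof (cases "sg H = 0")
    case True
    then have "H = 0" by (simp add: sg_eq_0_iff)
    then show ?thesis using True by (simp add: totdeg_def)
  next
    case False
    then have "coeff (sg H) (degree (sg H)) \<noteq> 0" by simp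
    then obtain j where "coeff (coeff (sg H) (degree (sg H))) j \<noteq> 0" by (metis poly_eqI coeff_0)
    then have jl: "j \<le> degree (sg H)" and nz: "coeff (coeff H (degree (sg H) - j)) j \<noteq> 0"
      by (auto simp: coeff_sg split: if_splits)
    have "degree (sg H) \<in> S" unfolding S_def using jl nz by (intro CollectI exI[of _ j] exI[of _ "degree (sg H) - j"]) auto
    then have "Max (insert 0 S) = degree (sg H)"
      using fin le by (intro Max_eqI) auto
    then show ?thesis unfolding totdeg_def S_def .
  qed
qed


lemma nonsq: fixes \<alpha> \<beta> :: "complex poly"
  assumes "\<alpha> \<noteq> 0" "\<beta> \<noteq> 0" shows "[:0,1:] * \<beta>^2 \<noteq> \<alpha>^2"
proof
  assume h: "[:0,1:] * \<beta>^2 = \<alpha>^2"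
  have d1: "degree ([:0,1:] * \<beta>^2) = 1 + 2 * degree \<beta>"
    using assms by (subst degree_mult_eq) (auto simp: degree_power_eq)
  have d2: "degree (\<alpha>^2) = 2 * degree \<alpha>" using assms by (simp add: degree_power_eq)
  have "1 + 2 * degree \<beta> = 2 * degree \<alpha>" using d1 d2 h by metis
  then show False by presburger
qed

lemma degL: fixes q \<pi> :: bipoly assumes "\<pi> \<noteq> 0"
  shows "degree (T1 * q^2 - \<pi>^2) = 2 * max (degree q) (degree \<pi>)"
proof -
  have dT: "degree (T1 * q^2) = 2 * degree q"
    by (cases "q = 0") (simp_all add: T1_mult degree_power_eq)
  have dP: "degree (\<pi>^2) = 2 * degree \<pi>" using assms by (simp add: degree_power_eq)
  have eq: "T1 * q^2 - \<pi>^2 = T1 * q^2 + (- (\<pi>^2))" by simp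
  consider "degree q < degree \<pi>" | "degree q > degree \<pi>" | "degree q = degree \<pi>" by linarith
  then show ?thesis
  proof cases
    case 1 then show ?thesis unfolding eq using dT dP by (subst degree_add_eq_right) auto
  next
    case 2 then show ?thesis unfolding eq using dT dP by (subst degree_add_eq_left) auto
  next
    case 3
    show ?thesis
    proof (cases "q = 0")
      case True then show ?thesis using dP 3 by simp
    next
      case False
      have cq: "coeff (q^2) (2 * degree q) = lead_coeff q ^ 2"
        using lead_coeff_power[of q 2] degree_power_eq[OF False, of 2] by simp
      have cp: "coeff (\<pi>^2) (2 * degree \<pi>) = lead_coeff \<pi> ^ 2"
        using lead_coeff_power[of \<pi> 2] degree_power_eq[OF assms, of 2] by simp
      have c: "coeff (T1 * q^2 - \<pi>^2) (2 * degree \<pi>) = [:0,1:] * (lead_coeff q)^2 - (lead_coeff \<pi>)^2"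
        using cq cp 3 by (simp add: T1_mult)
      have "[:0,1:] * (lead_coeff q)^2 - (lead_coeff \<pi>)^2 \<noteq> 0"
        using nonsq[of "lead_coeff \<pi>" "lead_coeff q"] False assms by auto
      then have "2 * degree \<pi> \<le> degree (T1 * q^2 - \<pi>^2)" using c le_degree by metis
      moreover have "degree (T1 * q^2 - \<pi>^2) \<le> 2 * degree \<pi>"
        using dT dP 3 by (intro degree_diff_le) auto
      ultimately show ?thesis using 3 by simp
    qed
  qed
qed


lemma T2_dvd_iff: "T2 dvd X \<longleftrightarrow> coeff X 0 = 0"
  unfolding T2_def using dvd_iff_poly_eq_0[of 0 X] by (simp add: poly_0_coeff_0)

lemma prime_T2: "prime_elem T2"
  unfolding T2_def by (rule prime_elem_linear_poly) auto

lemma T2_not_unit: "\<not> is_unit T2"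
  using prime_T2 prime_elem_def by blast

lemma T2_ne0: "T2 \<noteq> 0" by (simp add: T2_def)

lemma eval2_at0: "eval2 H x 0 = poly (coeff H 0) x"
  unfolding eval2_def by (simp add: poly_0_coeff_0 coeff_map_poly)

lemma homog_coeff0:
  assumes "homogeneous D c" "coeff c 0 \<noteq> 0"
  shows "poly (coeff c 0) 1 \<noteq> 0"
proof -
  have e: "coeff c 0 = monom (coeff (coeff c 0) D) D"
  proof (intro poly_eqI)
    fix n
    show "coeff (coeff c 0) n = coeff (monom (coeff (coeff c 0) D) D) n"
    proof (cases "n = D")
      case False
      then have "coeff (coeff c 0) n = 0" using assms(1) unfolding homogeneous_def by force
      then show ?thesis using False by (simp add: coeff_monom)
    qed (simp add: coeff_monom)
  qed
  have "poly (coeff c 0) 1 = coeff (coeff c 0) D" by (subst e) (simp add: poly_monom)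
  moreover have "coeff (coeff c 0) D \<noteq> 0" using e assms(2) by (metis monom_eq_0)
  ultimately show ?thesis by simp
qed

lemma gen_alg:
  fixes P Q R :: bipoly
  assumes PR: "P = T2^m * R" and TQ: "T2^(Suc m) dvd Q" and R0: "poly (coeff R 0) 1 \<noteq> 0"
  shows "T2 dvd (Q div gcd P Q)" and "poly (coeff (P div gcd P Q) 0) 1 \<noteq> 0"
proof -
  have cR: "coeff R 0 \<noteq> 0" using R0 by auto
  then have nR: "\<not> T2 dvd R" by (simp add: T2_dvd_iff)
  have "R \<noteq> 0" using cR by auto
  then have P0: "P \<noteq> 0" using PR T2_ne0 by simp
  define g where "g = gcd P Q"
  define P1 where "P1 = P div g"
  define Q1 where "Q1 = Q div g"
  have cop: "coprime P1 Q1" unfolding P1_def Q1_def g_def using P0 by (intro div_gcd_coprime) auto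
  have Pg: "P = P1 * g" unfolding P1_def g_def by simp
  have Qg: "Q = Q1 * g" unfolding Q1_def g_def by simp
  show TQ1: "T2 dvd (Q div gcd P Q)"
  proof (rule ccontr)
    assume "\<not> T2 dvd (Q div gcd P Q)"
    then have "coprime T2 Q1" unfolding Q1_def g_def by (intro prime_elem_imp_coprime prime_T2)
    then have "coprime (T2^Suc m) Q1" by simp
    then have "T2^Suc m dvd g" using TQ Qg by (metis coprime_dvd_mult_right_iff)
    then have "T2^Suc m dvd P" using Pg by (metis dvd_mult2 mult.commute)
    then have "T2^m * T2 dvd T2^m * R" using PR by (simp add: mult.commute)
    then have "T2 dvd R" using T2_ne0 by simp
    then show False using nR by simp
  qed
  have "\<not> T2 dvd P1"
  proof
    assume "T2 dvd P1"
    then have "is_unit T2" using cop TQ1 coprime_common_divisor unfolding Q1_def g_def by blast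
    then show False using T2_not_unit by simp
  qed
  then have "coprime T2 P1" by (intro prime_elem_imp_coprime prime_T2)
  then have "coprime P1 (T2^m)" by (simp add: coprime_commute)
  moreover have "P1 dvd T2^m * R" using Pg PR by (metis dvd_triv_left)
  ultimately have "P1 dvd R" by (metis coprime_dvd_mult_right_iff)
  then obtain k where "R = P1 * k" by (auto elim: dvdE)
  then have "poly (coeff R 0) 1 = poly (coeff P1 0) 1 * poly (coeff k 0) 1" by (simp add: coeff_mult_0)
  then show "poly (coeff (P div gcd P Q) 0) 1 \<noteq> 0" using R0 unfolding P1_def g_def by auto
qed


lemma alg_main:
  assumes h1: "homogeneous D c1" and h2: "homogeneous D c2" and cop: "coprime c1 c2"
  shows "T2 dvd snd (F1 (c1, c2))" and "eval2 (fst (F1 (c1, c2))) 1 0 \<noteq> 0"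
proof -
  define P where "P = (T1 * c2^2 - T2 * c1^2)^2"
  define Q where "Q = 4 * T2 * c1 * c2 * (c2 - c1) * (T1 * c2 - T2 * c1)"
  have F: "F1 (c1, c2) = (P div gcd P Q, Q div gcd P Q)"
    unfolding F1_def Fmap_def P_def Q_def by simp
  have pT1: "poly T1 0 = [:0,1:]" by (simp add: T1_def)
  have pT2: "poly T2 0 = 0" by (simp add: T2_def)
  have conc: "T2 dvd snd (F1 (c1, c2)) \<and> poly (coeff (fst (F1 (c1, c2))) 0) 1 \<noteq> 0"
  proof (cases "T2 dvd c2")
    case False
    then have c20: "coeff c2 0 \<noteq> 0" by (simp add: T2_dvd_iff)
    have a: "P = T2^0 * P" by simp
    have "Q = T2 * (4 * c1 * c2 * (c2 - c1) * (T1 * c2 - T2 * c1))" unfolding Q_def by (simp only: mult_ac)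
    then have b: "T2^(Suc 0) dvd Q" by simp
    have "coeff P 0 = ([:0,1:] * (coeff c2 0)^2)^2"
      unfolding P_def poly_0_coeff_0[symmetric] by (simp add: pT1 pT2)
    then have "poly (coeff P 0) 1 = (poly (coeff c2 0) 1)^4" by simp
    then have c: "poly (coeff P 0) 1 \<noteq> 0" using homog_coeff0[OF h2 c20] by simp
    show ?thesis using gen_alg[OF a b c] F by simp
  next
    case True
    then obtain e where e: "c2 = T2 * e" by (auto elim: dvdE)
    have "\<not> T2 dvd c1"
    proof
      assume "T2 dvd c1"
      then have "is_unit T2" using cop True coprime_common_divisor by blast
      then show False using T2_not_unit by simp
    qed
    then have c10: "coeff c1 0 \<noteq> 0" by (simp add: T2_dvd_iff)
    define R where "R = (T1 * T2 * e^2 - c1^2)^2"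
    have a: "P = T2^2 * R" unfolding P_def R_def e by algebra
    have qe: "Q = T2^3 * (4 * c1 * e * (T2 * e - c1) * (T1 * e - c1))"
      unfolding Q_def e by algebra
    have b: "T2^(Suc 2) dvd Q" unfolding qe by simp
    have "coeff R 0 = (coeff c1 0)^4"
      unfolding R_def poly_0_coeff_0[symmetric] by (simp add: pT1 pT2)
    then have "poly (coeff R 0) 1 = (poly (coeff c1 0) 1)^4" by simp
    then have c: "poly (coeff R 0) 1 \<noteq> 0" using homog_coeff0[OF h1 c10] by simp
    show ?thesis using gen_alg[OF a b c] F by simp
  qed
  then show "T2 dvd snd (F1 (c1, c2))" by simp
  show "eval2 (fst (F1 (c1, c2))) 1 0 \<noteq> 0" using conc by (simp add: eval2_at0)
qed


lemma Fstep_R: "Fstep (P, T2 * R) = ((T1*T2*R^2 - P^2)^2, T2 * (4*P*R*(T2*R - P)*(T1*R - P)))"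
proof -
  have "Fmap (P, T2 * R) = (T2^2 * (T1*T2*R^2 - P^2)^2, T2^2 * (T2 * (4*P*R*(T2*R - P)*(T1*R - P))))"
    unfolding Fmap_def by simp algebra
  then show ?thesis unfolding Fstep_def using T2_ne0 by simp
qed

definition GG :: "bipoly \<times> bipoly \<Rightarrow> nat \<Rightarrow> bipoly \<times> bipoly" where
  "GG C k = (Fstep ^^ k) (F1 C)"
definition RR :: "bipoly \<times> bipoly \<Rightarrow> nat \<Rightarrow> bipoly" where
  "RR C k = snd (GG C k) div T2"

lemma GG_0: "GG C 0 = F1 C" by (simp add: GG_def)
lemma GG_Suc: "GG C (Suc k) = Fstep (GG C k)" by (simp add: GG_def)
lemma Fseq_GG: "n \<ge> 1 \<Longrightarrow> Fseq C n = GG C (n - 1)" by (simp add: Fseq_def GG_def)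

lemma GG_dvd:
  assumes "T2 dvd snd (F1 C)" shows "T2 dvd snd (GG C k)"
proof (induction k)
  case 0 then show ?case using assms by (simp add: GG_0)
next
  case (Suc k)
  then obtain R where R: "snd (GG C k) = T2 * R" by (auto elim: dvdE)
  have "GG C (Suc k) = Fstep (fst (GG C k), T2 * R)" using R by (metis GG_Suc prod.collapse)
  then show ?case by (simp add: Fstep_R)
qed

lemma GG_snd:
  assumes "T2 dvd snd (F1 C)" shows "snd (GG C k) = T2 * RR C k"
  unfolding RR_def using GG_dvd[OF assms] by simp

lemma GG_rec:
  assumes "T2 dvd snd (F1 C)"
  shows "fst (GG C (Suc k)) = (T1*T2*(RR C k)^2 - (fst (GG C k))^2)^2"
    and "RR C (Suc k) = 4*(fst (GG C k))*(RR C k)*(T2*(RR C k) - fst (GG C k))*(T1*(RR C k) - fst (GG C k))"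
proof -
  have e: "GG C (Suc k) = Fstep (fst (GG C k), T2 * RR C k)"
    using GG_snd[OF assms, of k] by (metis GG_Suc prod.collapse)
  show "fst (GG C (Suc k)) = (T1*T2*(RR C k)^2 - (fst (GG C k))^2)^2"
    unfolding e by (simp add: Fstep_R)
  show "RR C (Suc k) = 4*(fst (GG C k))*(RR C k)*(T2*(RR C k) - fst (GG C k))*(T1*(RR C k) - fst (GG C k))"
    unfolding RR_def e using T2_ne0 by (simp add: Fstep_R)
qed

definition pp where "pp C k t = eval2 (fst (GG C k)) 1 t"
definition rr where "rr C k t = eval2 (RR C k) 1 t"

lemma pp_rec:
  assumes "T2 dvd snd (F1 C)"
  shows "pp C (Suc k) t = (t * (rr C k t)^2 - (pp C k t)^2)^2"
    and "rr C (Suc k) t = 4 * pp C k t * rr C k t * (t * rr C k t - pp C k t) * (rr C k t - pp C k t)"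
  unfolding pp_def rr_def GG_rec[OF assms] by (simp_all add: eval2_simps)

lemma pnorm_GG:
  assumes "T2 dvd snd (F1 C)"
  shows "pnorm (evalpair (GG C k) 1 t) = max (cmod (pp C k t)) (cmod (t * rr C k t))"
  unfolding pnorm_def evalpair_def pp_def rr_def GG_snd[OF assms] by (simp add: eval2_simps)

lemma pp_0:
  assumes "T2 dvd snd (F1 C)"
  shows "pp C k 0 = (pp C 0 0)^(4^k)"
proof (induction k)
  case (Suc k)
  show ?case by (simp add: pp_rec[OF assms] Suc power_mult[symmetric] power_Suc)
qed simp


lemma pdeg_sg: "pdeg F = max (degree (sg (fst F))) (degree (sg (snd F)))"
  by (simp add: pdeg_def totdeg_sg)

lemmas sg_simps = sg_add sg_diff sg_mult sg_power sg_numeral sg_T1 sg_T2 sg_one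

lemma deg_sq: "degree ((X::bipoly)^2) = 2 * degree X"
  by (cases "X = 0") (simp_all add: degree_power_eq)

lemma deg4: "degree (4 :: bipoly) = 0" by (simp add: numeral_poly)

lemma pdeg_step:
  assumes dv: "T2 dvd snd (F1 C)" and nz: "fst (GG C k) \<noteq> 0"
  shows "pdeg (GG C (Suc k)) = 4 * pdeg (GG C k)"
proof -
  define \<pi> where "\<pi> = sg (fst (GG C k))"
  define \<rho> where "\<rho> = sg (RR C k)"
  define q where "q = T2 * \<rho>"
  have pnz: "\<pi> \<noteq> 0" using nz by (simp add: \<pi>_def sg_eq_0_iff)
  have sq: "sg (snd (GG C k)) = q" unfolding q_def \<rho>_def GG_snd[OF dv] by (simp add: sg_simps)
  define M where "M = max (degree q) (degree \<pi>)"
  have M: "pdeg (GG C k) = M" unfolding pdeg_sg sq M_def \<pi>_def by simp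
  have s1: "sg (fst (GG C (Suc k))) = (T1 * q^2 - \<pi>^2)^2"
    unfolding GG_rec(1)[OF dv] q_def \<pi>_def \<rho>_def by (simp add: sg_simps) algebra
  have s2: "sg (snd (GG C (Suc k))) = 4 * \<pi> * q * (q - \<pi>) * (T1 * q - \<pi>)"
    unfolding GG_snd[OF dv] GG_rec(2)[OF dv] q_def \<pi>_def \<rho>_def by (simp add: sg_simps)
  have d1: "degree (sg (fst (GG C (Suc k)))) = 4 * M"
    unfolding s1 deg_sq degL[OF pnz] M_def by simp
  have dT: "degree (T1 * q) \<le> degree q" by (simp add: T1_mult degree_smult_le)
  have "degree (4 * \<pi> * q * (q - \<pi>) * (T1 * q - \<pi>))
      \<le> degree (4::bipoly) + degree \<pi> + degree q + degree (q - \<pi>) + degree (T1 * q - \<pi>)"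
    by (meson add_le_mono degree_mult_le le_refl order_trans)
  moreover have "degree (q - \<pi>) \<le> M" unfolding M_def by (intro degree_diff_le) auto
  moreover have "degree (T1 * q - \<pi>) \<le> M" unfolding M_def using dT by (intro degree_diff_le) auto
  ultimately have d2: "degree (sg (snd (GG C (Suc k)))) \<le> 4 * M"
    unfolding s2 deg4 M_def by linarith
  have "pdeg (GG C (Suc k)) = 4 * M" unfolding pdeg_sg using d1 d2 by simp
  then show ?thesis using M by simp
qed


lemma ana:
  fixes p r t :: complex
  assumes t8: "cmod t \<le> 1/8"
  shows "(max (cmod p) (cmod (t*r)))^4 / 4 \<le>
         max (cmod ((t*r^2 - p^2)^2)) (cmod (t * (4*p*r*(t*r - p)*(r - p))))"
proof -
  define a where "a = cmod p"
  define b where "b = cmod r"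
  define \<tau> where "\<tau> = cmod t"
  define X where "X = \<tau> * b^2"
  have a0: "a \<ge> 0" and b0: "b \<ge> 0" and t0: "\<tau> \<ge> 0" using a_def b_def \<tau>_def by auto
  have X0: "X \<ge> 0" using X_def t0 b0 by simp
  have tle: "\<tau> \<le> 1/8" using t8 \<tau>_def by simp
  have ntr: "cmod (t*r) = \<tau> * b" by (simp add: \<tau>_def b_def norm_mult)
  have n1: "cmod ((t*r^2 - p^2)^2) = (cmod (t*r^2 - p^2))^2" by (simp add: norm_power)
  have tri: "\<bar>X - a^2\<bar> \<le> cmod (t*r^2 - p^2)"
    using norm_triangle_ineq3[of "t*r^2" "p^2"] by (simp add: X_def \<tau>_def b_def a_def norm_mult norm_power)
  show ?thesis
  proof (cases "X \<ge> 2 * a^2")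
    case True
    then have "X / 2 \<le> cmod (t*r^2 - p^2)" using tri by linarith
    then have "(X/2)^2 \<le> (cmod (t*r^2 - p^2))^2" using X0 by (intro power_mono) auto
    then have f1: "X^2 / 4 \<le> cmod ((t*r^2 - p^2)^2)" using n1 by (simp add: power_divide)
    have "(max a (\<tau> * b))^4 \<le> X^2"
    proof (cases "\<tau> * b \<ge> a")
      case True
      then have "(max a (\<tau> * b))^4 = \<tau>^2 * (\<tau>^2 * b^4)" by (simp add: max_def power_mult_distrib power4_eq_xxxx power2_eq_square)
      also have "\<dots> \<le> 1 * (\<tau>^2 * b^4)" using t0 tle by (intro mult_right_mono) (auto simp: power_le_one)
      also have "\<dots> = X^2" by (simp add: X_def power_mult_distrib power4_eq_xxxx power2_eq_square)
      finally show ?thesis .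
    next
      case False
      then have "(max a (\<tau> * b))^4 = (a^2)^2" by (simp add: max_def power4_eq_xxxx power2_eq_square)
      also have "\<dots> \<le> X^2" using True zero_le_power2[of a] by (intro power_mono) linarith+
      finally show ?thesis .
    qed
    then show ?thesis using f1 unfolding a_def[symmetric] ntr by linarith
  next
    case False
    then have XL: "X < 2 * a^2" by simp
    have "(\<tau> * b)^2 = \<tau> * X" by (simp add: X_def power2_eq_square)
    also have "\<dots> \<le> X / 8"
    proof -
      have "X * (\<tau> * 8) \<le> X * 1" using tle X0 by (intro mult_left_mono) auto
      then show ?thesis by (simp add: algebra_simps)
    qed
    finally have tb2: "(\<tau> * b)^2 < (a/2)^2" using XL by (simp add: power_divide)
    then have tb: "\<tau> * b < a/2" using a0 power_less_imp_less_base[OF tb2] by simp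
    have m: "max a (\<tau> * b) = a" using tb a0 by simp
    show ?thesis
    proof (cases "X \<le> a^2 / 2")
      case True
      then have "a^2 / 2 \<le> cmod (t*r^2 - p^2)" using tri by linarith
      then have "(a^2/2)^2 \<le> (cmod (t*r^2 - p^2))^2" using a0 by (intro power_mono) auto
      then have "a^4 / 4 \<le> cmod ((t*r^2 - p^2)^2)" using n1 by (simp add: power_divide power4_eq_xxxx power2_eq_square)
      then show ?thesis unfolding a_def[symmetric] ntr m by linarith
    next
      case False
      then have XM: "X > a^2/2" by simp
      have "b^2 * (\<tau> * 8) \<le> b^2 * 1" using tle by (intro mult_left_mono) auto
      then have "b^2 \<ge> 8 * X" unfolding X_def by (simp add: algebra_simps)
      then have bb: "(2*a)^2 < b^2" using XM by (simp add: power2_eq_square)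
      have ab: "2 * a < b" using b0 power_less_imp_less_base[OF bb] by simp
      have c1: "a / 2 \<le> cmod (t*r - p)"
        using norm_triangle_ineq3[of "t*r" p] tb by (simp add: a_def[symmetric] ntr)
      have c2: "b / 2 \<le> cmod (r - p)"
        using norm_triangle_ineq3[of r p] ab by (simp add: a_def[symmetric] b_def[symmetric])
      have "cmod (t * (4*p*r*(t*r - p)*(r - p))) = 4 * \<tau> * a * b * cmod (t*r - p) * cmod (r - p)"
        by (simp add: norm_mult \<tau>_def a_def b_def)
      also have "\<dots> \<ge> 4 * \<tau> * a * b * (a/2) * (b/2)"
        using c1 c2 a0 b0 t0 by (intro mult_mono) (auto intro!: mult_nonneg_nonneg)
      finally have "cmod (t * (4*p*r*(t*r - p)*(r - p))) \<ge> a^2 * X"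
        by (simp add: X_def power2_eq_square mult_ac)
      moreover have "a^2 * X \<ge> a^2 * (a^2/2)" using XM a0 by (intro mult_left_mono) auto
      moreover have "a^2 * (a^2/2) \<ge> a^4/4" using a0 by (simp add: power4_eq_xxxx power2_eq_square)
      ultimately show ?thesis unfolding a_def[symmetric] ntr m by linarith
    qed
  qed
qed


lemma logiter:
  fixes m :: "nat \<Rightarrow> real"
  assumes st: "\<And>k. (m k)^4 / 4 \<le> m (Suc k)" and pos: "m K > 0"
  shows "m (K + j) > 0 \<and> ln (m K) / 4^K - ln 4 / 4^K + ln 4 / 4^(K+j) \<le> ln (m (K + j)) / 4^(K+j)"
proof (induction j)
  case 0 then show ?case using pos by simp
next
  case (Suc j)
  define x where "x = m (K + j)"
  define y where "y = m (K + Suc j)"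
  define u where "u = (4::real)^(K+j)"
  define A where "A = ln (m K) / 4^K - ln 4 / 4^K"
  have x0: "x > 0" using Suc x_def by simp
  have u0: "u > 0" by (simp add: u_def)
  have IH: "A + ln 4 / u \<le> ln x / u" using Suc unfolding A_def u_def x_def by simp
  have yx: "x^4 / 4 \<le> y" using st[of "K+j"] unfolding x_def y_def by simp
  have x4: "x^4 / 4 > 0" using x0 by simp
  then have y0: "y > 0" using yx by linarith
  have "ln (x^4/4) \<le> ln y" using yx x4 y0 by simp
  moreover have "ln (x^4/4) = 4 * ln x - ln 4" using x0 by (simp add: ln_div ln_realpow)
  ultimately have ly: "4 * ln x - ln 4 \<le> ln y" by simp
  have "(4 * ln x - ln 4) / (4 * u) \<le> ln y / (4 * u)" using ly u0 by (intro divide_right_mono) auto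
  moreover have "(4 * ln x - ln 4) / (4 * u) = ln x / u - ln 4 / (4 * u)" using u0 by (simp add: field_simps)
  moreover have "ln 4 / (4 * u) \<le> ln 4 / u - ln 4 / (4 * u)"
  proof -
    have "ln (4::real) > 0" by simp
    then show ?thesis using u0 by (simp add: field_simps)
  qed
  ultimately have "A + ln 4 / (4 * u) \<le> ln y / (4 * u)" using IH by linarith
  moreover have "(4::real)^(K + Suc j) = 4 * u" by (simp add: u_def)
  ultimately show ?case using y0 unfolding A_def y_def by simp
qed


theorem lemma4p5:
  fixes c1 c2 :: bipoly and D :: nat
  assumes "homogeneous D c1" and "homogeneous D c2"
    and "coprime c1 c2" and "c2 \<noteq> 0"
    and "Fract (dehom c1) (dehom c2) \<noteq> 0"
    and "Fract (dehom c1) (dehom c2) \<noteq> 1"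
    and "Fract (dehom c1) (dehom c2) \<noteq> Fract [:0, 1:] 1"
  shows "\<exists>\<epsilon>0>0. \<forall>\<epsilon>. 0 < \<epsilon> \<and> \<epsilon> < \<epsilon>0 \<longrightarrow>
    (\<exists>\<delta>>0. \<exists>N>0. \<forall>(t::complex) (n::nat). cmod t < \<delta> \<and> n \<ge> N \<longrightarrow>
       ln (pnorm (evalpair (Fseq (c1, c2) n) 1 t)) / real (pdeg (Fseq (c1, c2) n))
       - ln (cmod (eval2 (fst (F1 (c1, c2))) 1 0)) / real (pdeg (F1 (c1, c2))) > - \<epsilon>)"
proof -
  define C where "C = (c1, c2)"
  have dv: "T2 dvd snd (F1 C)" and p0nz: "eval2 (fst (F1 C)) 1 0 \<noteq> 0"
    using alg_main[OF assms(1-3)] unfolding C_def by auto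
  define p0 where "p0 = eval2 (fst (F1 C)) 1 0"
  have ppk0: "pp C k 0 = p0^(4^k)" for k
    using pp_0[OF dv, of k] by (simp add: p0_def pp_def GG_0)
  have ppnz: "pp C k 0 \<noteq> 0" for k using ppk0 p0nz p0_def by simp
  have fnz: "fst (GG C k) \<noteq> 0" for k
  proof
    assume "fst (GG C k) = 0"
    then have "pp C k 0 = 0" by (simp add: pp_def eval2_def)
    then show False using ppnz by simp
  qed
  define d where "d = pdeg (F1 C)"
  have degk: "pdeg (GG C k) = 4^k * d" for k
  proof (induction k)
    case 0 then show ?case by (simp add: d_def GG_0)
  next
    case (Suc k) then show ?case using pdeg_step[OF dv fnz[of k]] by simp
  qed
  define m where "m k t = pnorm (evalpair (GG C k) 1 t)" for k t
  have mstep: "(m k t)^4 / 4 \<le> m (Suc k) t" if "cmod t \<le> 1/8" for k t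
    unfolding m_def pnorm_GG[OF dv] pp_rec[OF dv] using ana[OF that] by simp
  have mge: "cmod (pp C k t) \<le> m k t" for k t
    unfolding m_def pnorm_GG[OF dv] by simp
  have main: "\<exists>\<delta>>0. \<exists>N>0. \<forall>(t::complex) (n::nat). cmod t < \<delta> \<and> n \<ge> N \<longrightarrow>
       ln (m (n - 1) t) / real (4^(n-1) * d) - ln (cmod p0) / real d > - \<epsilon>" if e0: "\<epsilon> > 0" for \<epsilon>
  proof (cases "d = 0")
    case True
    show ?thesis using True e0 by (intro exI[of _ 1]) auto
  next
    case False
    then have dpos: "real d > 0" by simp
    define e where "e = \<epsilon> * real d / 2"
    have epos: "e > 0" using e0 dpos by (simp add: e_def)
    obtain K :: nat where K: "2 * ln 4 / (\<epsilon> * real d) < real K" using reals_Archimedean2 by blast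
    have "2 * ln 4 / (\<epsilon> * real d) > 0" using e0 dpos by simp
    then have Kpos: "real K > 0" using K by linarith
    have "K < 2^K" by (rule less_exp)
    also have "(2::nat)^K \<le> 4^K" by (rule power_mono) auto
    finally have "real K \<le> real (4^K)" by linarith
    then have K4: "real K \<le> 4^K" by simp
    have "ln 4 / 4^K \<le> ln 4 / real K" using Kpos K4 by (intro divide_left_mono) auto
    also have "ln 4 / real K < e"
    proof -
      have "2 * ln 4 < real K * (\<epsilon> * real d)" using K e0 dpos by (simp add: field_simps)
      then show ?thesis using Kpos unfolding e_def by (simp add: field_simps)
    qed
    finally have l4: "ln 4 / 4^K < e" .
    have pK0: "cmod (pp C K 0) > 0" using ppnz by simp
    have cont1: "isCont (\<lambda>t. pp C K t) 0" unfolding pp_def eval2_def by simp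
    have cont2: "isCont (\<lambda>t. ln (cmod (pp C K t)) / 4^K) 0"
      using pK0 by (intro continuous_intros cont1) auto
    obtain d1 where d1: "d1 > 0" "\<And>t. dist t 0 < d1 \<Longrightarrow> dist (pp C K t) (pp C K 0) < cmod (pp C K 0)"
      using cont1 pK0 unfolding continuous_at_eps_delta by blast
    obtain d2 where d2: "d2 > 0" "\<And>t. dist t 0 < d2 \<Longrightarrow>
        dist (ln (cmod (pp C K t)) / 4^K) (ln (cmod (pp C K 0)) / 4^K) < e"
      using cont2 epos unfolding continuous_at_eps_delta by blast
    have lnp0: "ln (cmod (pp C K 0)) / 4^K = ln (cmod p0)"
      using p0nz p0_def by (simp add: ppk0 norm_power ln_realpow)
    show ?thesis
    proof (intro exI[of _ "min (min d1 d2) (1/8)"] exI[of _ "Suc K"] conjI allI impI)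
      show "min (min d1 d2) (1/8) > (0::real)" using d1 d2 by simp
      show "Suc K > 0" by simp
      fix t :: complex and n :: nat
      assume tn: "cmod t < min (min d1 d2) (1/8) \<and> Suc K \<le> n"
      then have t8: "cmod t \<le> 1/8" and td1: "dist t 0 < d1" and td2: "dist t 0 < d2" by auto
      have "n - 1 = K + (n - 1 - K)" using tn by auto
      then obtain j where nj: "n - 1 = K + j" by blast
      have "pp C K t \<noteq> 0"
      proof
        assume "pp C K t = 0"
        then show False using d1(2)[OF td1] by (simp add: dist_norm)
      qed
      then have pKt: "cmod (pp C K t) > 0" by simp
      have mK: "m K t > 0" using pKt mge[of K t] by linarith
      have it: "m (K + j) t > 0 \<and> ln (m K t) / 4^K - ln 4 / 4^K + ln 4 / 4^(K+j) \<le> ln (m (K + j) t) / 4^(K+j)"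
        using logiter[of "\<lambda>k. m k t" K j] mstep[OF t8] mK by blast
      have "ln (cmod (pp C K t)) \<le> ln (m K t)" using pKt mK mge[of K t] by simp
      then have a1: "ln (cmod (pp C K t)) / 4^K \<le> ln (m K t) / 4^K" by (simp add: divide_right_mono)
      have a2: "ln (cmod (pp C K t)) / 4^K > ln (cmod p0) - e"
        using d2(2)[OF td2] lnp0 by (simp add: dist_norm abs_less_iff)
      have a3: "ln 4 / 4^(K+j) \<ge> (0::real)" by simp
      define L where "L = ln (m (n-1) t) / 4^(n-1)"
      have L: "L > ln (cmod p0) - 2 * e" using it a1 a2 a3 l4 unfolding L_def nj by linarith
      have "ln (m (n - 1) t) / real (4^(n-1) * d) - ln (cmod p0) / real d = (L - ln (cmod p0)) / real d"
        unfolding L_def using dpos by (simp add: field_simps)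
      also have "\<dots> > (- 2 * e) / real d" using L dpos by (intro divide_strict_right_mono) auto
      also have "(- 2 * e) / real d = - \<epsilon>" using dpos unfolding e_def by simp
      finally show "ln (m (n - 1) t) / real (4^(n-1) * d) - ln (cmod p0) / real d > - \<epsilon>" .
    qed
  qed
  show ?thesis
  proof (rule exI[of _ "1::real"], intro conjI allI impI)
    fix \<epsilon> :: real assume "0 < \<epsilon> \<and> \<epsilon> < 1"
    then obtain \<delta> N where dN: "\<delta> > 0" "N > 0" and H: "\<And>t n. cmod t < \<delta> \<and> n \<ge> N \<Longrightarrow>
       ln (m (n - 1) t) / real (4^(n-1) * d) - ln (cmod p0) / real d > - \<epsilon>"
      using main by blast
    have "\<forall>(t::complex) (n::nat). cmod t < \<delta> \<and> n \<ge> N \<longrightarrow>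
       ln (pnorm (evalpair (Fseq (c1, c2) n) 1 t)) / real (pdeg (Fseq (c1, c2) n))
       - ln (cmod (eval2 (fst (F1 (c1, c2))) 1 0)) / real (pdeg (F1 (c1, c2))) > - \<epsilon>"
    proof (intro allI impI)
      fix t :: complex and n :: nat
      assume tn: "cmod t < \<delta> \<and> N \<le> n"
      then have n1: "n \<ge> 1" using dN by simp
      have fs: "Fseq (c1, c2) n = GG C (n - 1)" using Fseq_GG[OF n1] C_def by simp
      have e1: "pnorm (evalpair (Fseq (c1, c2) n) 1 t) = m (n-1) t" by (simp only: fs m_def)
      have e2: "pdeg (Fseq (c1, c2) n) = 4^(n-1) * d" by (simp only: fs degk)
      have e3: "eval2 (fst (F1 (c1,c2))) 1 0 = p0" by (simp add: p0_def C_def)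
      have e4: "pdeg (F1 (c1,c2)) = d" by (simp add: d_def C_def)
      show "ln (pnorm (evalpair (Fseq (c1, c2) n) 1 t)) / real (pdeg (Fseq (c1, c2) n))
       - ln (cmod (eval2 (fst (F1 (c1, c2))) 1 0)) / real (pdeg (F1 (c1, c2))) > - \<epsilon>"
        unfolding e1 e2 e3 e4 by (rule H[OF tn])
    qed
    note allH = this
    show "\<exists>\<delta>>0. \<exists>N>0. \<forall>(t::complex) (n::nat). cmod t < \<delta> \<and> n \<ge> N \<longrightarrow>
       ln (pnorm (evalpair (Fseq (c1, c2) n) 1 t)) / real (pdeg (Fseq (c1, c2) n))
       - ln (cmod (eval2 (fst (F1 (c1, c2))) 1 0)) / real (pdeg (F1 (c1, c2))) > - \<epsilon>"
      apply (rule exI[where x=\<delta>]) apply (rule conjI[OF dN(1)])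
      apply (rule exI[where x=N]) apply (rule conjI[OF dN(2)]) by (rule allH)
  qed (rule zero_less_one)
qed

end
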